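(* Let $\phi$ be a repulsive pair potential on $\mathbb{R}^d$, $\lambda>0$, and $\Lambda_n=[-n,n]^d$. For $t\in\mathbb{R}$ define the activity function $\boldsymbol{\lambda}_t(x)=\lambda\mathbf 1\{x\in\Lambda_n\}\mathbf 1\{x_1\ge t\}$. Then $$\log Z_{\Lambda_n}(\lambda)=\int_{\Lambda_n}\rho_{\boldsymbol{\lambda}_{x_1}}(x)\,dx.$$
   Context: $\phi$ symmetric, $\phi\ge0$ (finite range); $H=\sum_{i<j}\phi(x_i-x_j)$; $Z_\Lambda(\lambda)=1+\sum_{k\ge1}\frac{\lambda^k}{k!}\int_{\Lambda^k}e^{-H}dx$. For a bounded, boundedly supported activity function $\boldsymbol{\lambda}$, $\mu_{\boldsymbol{\lambda}}$ is the Gibbs point process with density $\prod\boldsymbol{\lambda}(x_i)e^{-H}/Z(\boldsymbol{\lambda})$ and $\rho_{\boldsymbol{\lambda}}(v)=\boldsymbol{\lambda}(v)\mathbb{E}_{\mu_{\boldsymbol{\lambda}}}e^{-\sum_{x\in\mathbf X}\phi(v-x)}$ is its one-point density. $x_1$ denotes the first coordinate of $x$. *)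

theory Defs
  imports "HOL-Analysis.Analysis"
begin

text \<open>Points of R^d are elements of real^'d (d = CARD('d)).
  A pair potential takes values in [0, +infinity]; its Boltzmann factor e^{-phi}
  is 0 where phi = +infinity.\<close>

definition boltz :: "('a \<Rightarrow> ereal) \<Rightarrow> 'a \<Rightarrow> real" where
  "boltz \<phi> x = (if \<phi> x = \<infinity> then 0 else exp (- real_of_ereal (\<phi> x)))"

definition gibbs_weight :: "('a::ab_group_add \<Rightarrow> ereal) \<Rightarrow> nat \<Rightarrow> (nat \<Rightarrow> 'a) \<Rightarrow> real" where
  "gibbs_weight \<phi> k xs = (\<Prod>i<k. \<Prod>j\<in>{i<..<k}. boltz \<phi> (xs i - xs j))"

definition lebk :: "nat \<Rightarrow> (nat \<Rightarrow> real^'d) measure" where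
  "lebk k = PiM {..<k} (\<lambda>_. lborel)"

definition Z_vol :: "(real^'d \<Rightarrow> ereal) \<Rightarrow> (real^'d) set \<Rightarrow> real \<Rightarrow> real" where
  "Z_vol \<phi> \<Lambda> l = 1 + (\<Sum>k. l ^ Suc k / fact (Suc k) *
      (\<integral>xs. indicator (PiE {..<Suc k} (\<lambda>_. \<Lambda>)) xs * gibbs_weight \<phi> (Suc k) xs \<partial>lebk (Suc k)))"

text \<open>k-point integral int_{(R^d)^k} prod_i lam(x_i) e^{-H(x)} F(x) dx for a
  function F of the (ordered representation of the) configuration.\<close>
definition janossy_int :: "(real^'d \<Rightarrow> ereal) \<Rightarrow> (real^'d \<Rightarrow> real) \<Rightarrow> nat
      \<Rightarrow> (nat \<Rightarrow> (nat \<Rightarrow> real^'d) \<Rightarrow> real) \<Rightarrow> real" where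
  "janossy_int \<phi> lam k F =
     (\<integral>xs. (\<Prod>i<k. lam (xs i)) * gibbs_weight \<phi> k xs * F k xs \<partial>lebk k)"

definition Z_act :: "(real^'d \<Rightarrow> ereal) \<Rightarrow> (real^'d \<Rightarrow> real) \<Rightarrow> real" where
  "Z_act \<phi> lam = 1 + (\<Sum>k. janossy_int \<phi> lam (Suc k) (\<lambda>_ _. 1) / fact (Suc k))"

text \<open>Expectation under the Gibbs point process mu_lam, whose density with respect
  to Lebesgue measure on finite configurations is prod lam(x_i) e^{-H}/Z(lam):
  E F = (F(empty) + sum_{k>=1} 1/k! int prod lam(x_i) e^{-H} F(x) dx) / Z(lam).\<close>
definition gibbs_expect :: "(real^'d \<Rightarrow> ereal) \<Rightarrow> (real^'d \<Rightarrow> real)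
      \<Rightarrow> (nat \<Rightarrow> (nat \<Rightarrow> real^'d) \<Rightarrow> real) \<Rightarrow> real" where
  "gibbs_expect \<phi> lam F =
     (F 0 (\<lambda>_. undefined) + (\<Sum>k. janossy_int \<phi> lam (Suc k) F / fact (Suc k))) / Z_act \<phi> lam"

definition one_point_density :: "(real^'d \<Rightarrow> ereal) \<Rightarrow> (real^'d \<Rightarrow> real) \<Rightarrow> real^'d \<Rightarrow> real" where
  "one_point_density \<phi> lam v =
     lam v * gibbs_expect \<phi> lam (\<lambda>k xs. \<Prod>i<k. boltz \<phi> (v - xs i))"

definition cube :: "nat \<Rightarrow> (real^'d) set" where
  "cube n = {x. \<forall>i. - real n \<le> x $ i \<and> x $ i \<le> real n}"

text \<open>Activity lambda_t(x) = lambda 1{x in Lambda_n} 1{x_1 >= t}; the coordinate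
  playing the role of x_1 is the index j.\<close>
definition act_t :: "real \<Rightarrow> nat \<Rightarrow> 'd \<Rightarrow> real \<Rightarrow> real^'d \<Rightarrow> real" where
  "act_t l n j t x = l * indicator (cube n) x * indicator {y. y $ j \<ge> t} x"

end

theory Submission
  imports Defs
begin

lemma boltz_nonneg[simp]: "0 \<le> boltz \<phi> x" by (simp add: boltz_def)

lemma boltz_le1: assumes "\<forall>x. \<phi> x \<ge> 0" shows "boltz \<phi> x \<le> 1"
proof -
  have "0 \<le> real_of_ereal (\<phi> x)" using assms by (simp add: real_of_ereal_pos)
  then show ?thesis by (simp add: boltz_def)
qed

lemma boltz_meas[measurable]: assumes "\<phi> \<in> borel_measurable borel" shows "boltz \<phi> \<in> borel_measurable borel"
  unfolding boltz_def using assms by measurable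

lemma boltz_sym: fixes a b :: "'a::ab_group_add" assumes "\<forall>x. \<phi> (- x) = \<phi> x" shows "boltz \<phi> (a - b) = boltz \<phi> (b - a)"
proof -
  have "\<phi> (b - a) = \<phi> (a - b)" using assms[rule_format, of "a - b"] by simp
  then show ?thesis by (simp add: boltz_def)
qed

lemma gw_nonneg: "0 \<le> gibbs_weight \<phi> k xs"
  unfolding gibbs_weight_def by (intro prod_nonneg) auto

lemma gw_le1: assumes "\<forall>x. \<phi> x \<ge> 0" shows "gibbs_weight \<phi> k xs \<le> 1"
  unfolding gibbs_weight_def by (intro prod_le_1 conjI prod_nonneg boltz_le1 assms) auto

interpretation lb: product_sigma_finite "\<lambda>_. (lborel :: (real^'d) measure)"
  by standard

lemma gw_meas[measurable]: assumes [measurable]: "\<phi> \<in> borel_measurable borel"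
  shows "gibbs_weight \<phi> k \<in> borel_measurable (lebk k :: (nat \<Rightarrow> real^'d) measure)"
  unfolding gibbs_weight_def lebk_def
  apply (intro borel_measurable_prod)
  apply (rule measurable_compose[OF _ boltz_meas[OF assms]])
  apply (intro borel_measurable_diff)
   apply (rule measurable_compose[OF measurable_component_singleton], simp, simp)
  apply (rule measurable_compose[OF measurable_component_singleton], simp, simp)
  done

lemma space_lebk: "space (lebk k) = PiE {..<k} (\<lambda>_. UNIV)"
  by (simp add: lebk_def space_PiM)

lemma sets_lebk: "sets (lebk k) = sets (PiM {..<k} (\<lambda>_. lborel))"
  by (simp add: lebk_def)

lemma lebk_swap:
  fixes a b K :: nat assumes ab: "a < K" "b < K"
  shows "distr (lebk K) (lebk K) (\<lambda>xs::nat\<Rightarrow>real^'d. \<lambda>i\<in>{..<K}. xs (Transposition.transpose a b i)) = lebk K"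
proof -
  let ?t = "(\<lambda>xs::nat\<Rightarrow>real^'d. \<lambda>i\<in>{..<K}. xs (Transposition.transpose a b i))"
  have tK: "Transposition.transpose a b i < K" if "i < K" for i
    using that ab by (auto simp: Transposition.transpose_def)
  have tm: "?t \<in> measurable (PiM {..<K} (\<lambda>_. lborel)) (PiM {..<K} (\<lambda>_. lborel))"
    by (intro measurable_restrict measurable_component_singleton) (auto simp: tK)
  have bij: "bij_betw (Transposition.transpose a b) {..<K} {..<K}"
    using permutes_swap_id[of a "{..<K}" b] ab permutes_imp_bij by auto
  show ?thesis unfolding lebk_def
  proof (rule lb.PiM_eqI)
    show "finite {..<K}" by simp
    show "sets (distr (PiM {..<K} (\<lambda>_. lborel)) (PiM {..<K} (\<lambda>_. lborel)) ?t) = sets (PiM {..<K} (\<lambda>_. lborel))" by simp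
    fix A :: "nat \<Rightarrow> (real^'d) set" assume A: "\<And>i. i \<in> {..<K} \<Longrightarrow> A i \<in> sets lborel"
    have pre: "?t -` PiE {..<K} A \<inter> space (PiM {..<K} (\<lambda>_. lborel)) = PiE {..<K} (\<lambda>i. A (Transposition.transpose a b i))"
    proof (intro set_eqI iffI)
      fix xs assume "xs \<in> ?t -` PiE {..<K} A \<inter> space (PiM {..<K} (\<lambda>_. lborel))"
      then have 1: "\<And>i. i < K \<Longrightarrow> xs (Transposition.transpose a b i) \<in> A i" and 2: "xs \<in> extensional {..<K}"
        by (auto simp: space_PiM PiE_iff)
      show "xs \<in> PiE {..<K} (\<lambda>i. A (Transposition.transpose a b i))"
        using 1[of "Transposition.transpose a b i" for i] 2 tK by (auto simp: PiE_iff)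
    next
      fix xs assume "xs \<in> PiE {..<K} (\<lambda>i. A (Transposition.transpose a b i))"
      then have 1: "\<And>i. i < K \<Longrightarrow> xs i \<in> A (Transposition.transpose a b i)" and 2: "xs \<in> extensional {..<K}"
        by (auto simp: PiE_iff)
      show "xs \<in> ?t -` PiE {..<K} A \<inter> space (PiM {..<K} (\<lambda>_. lborel))"
        using 1[of "Transposition.transpose a b i" for i] 2 tK by (auto simp: PiE_iff space_PiM)
    qed
    have "emeasure (distr (PiM {..<K} (\<lambda>_. lborel)) (PiM {..<K} (\<lambda>_. lborel)) ?t) (PiE {..<K} A)
        = emeasure (PiM {..<K} (\<lambda>_. lborel)) (PiE {..<K} (\<lambda>i. A (Transposition.transpose a b i)))"
      using A by (subst emeasure_distr[OF tm]) (auto simp: pre)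
    also have "\<dots> = (\<Prod>i<K. emeasure lborel (A (Transposition.transpose a b i)))"
      using A tK by (subst lb.emeasure_PiM) auto
    also have "\<dots> = (\<Prod>i<K. emeasure lborel (A i))"
      using prod.reindex_bij_betw[OF bij, of "\<lambda>i. emeasure lborel (A i)"] by simp
    finally show "emeasure (distr (PiM {..<K} (\<lambda>_. lborel)) (PiM {..<K} (\<lambda>_. lborel)) ?t) (PiE {..<K} A)
        = (\<Prod>i\<in>{..<K}. emeasure lborel (A i))" by simp
  qed
qed

lemma ties_null:
  fixes g :: "real^'d \<Rightarrow> real"
  assumes [measurable]: "g \<in> borel_measurable borel" and null: "\<And>c. {y. g y = c} \<in> null_sets lborel"
    and ab: "a < K" "b < K" "a \<noteq> b"
  shows "{xs \<in> space (lebk K). g (xs a) = g (xs b)} \<in> null_sets (lebk K)"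
proof -
  let ?S = "{xs \<in> space (lebk K). g (xs a) = g (xs b)}"
  let ?I = "{..<K} - {a}"
  have ins: "insert a ?I = {..<K}" using ab by auto
  have [measurable]: "(\<lambda>x. x a) \<in> measurable (PiM {..<K} (\<lambda>_. lborel)) (borel :: (real^'d) measure)"
     "(\<lambda>x. x b) \<in> measurable (PiM {..<K} (\<lambda>_. lborel)) (borel :: (real^'d) measure)"
    using measurable_component_singleton[of a "{..<K}" "\<lambda>_. lborel"]
      measurable_component_singleton[of b "{..<K}" "\<lambda>_. lborel"] ab by auto
  have Sm: "?S \<in> sets (lebk K)"
    unfolding lebk_def by measurable
  have "emeasure (lebk K) ?S = (\<integral>\<^sup>+xs. indicator ?S xs \<partial>PiM (insert a ?I) (\<lambda>_. lborel))"
    using Sm unfolding ins by (simp add: lebk_def)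
  also have "\<dots> = (\<integral>\<^sup>+x. (\<integral>\<^sup>+y. indicator ?S (x(a:=y)) \<partial>lborel) \<partial>PiM ?I (\<lambda>_. lborel))"
  proof (rule lb.product_nn_integral_insert)
    show "indicator ?S \<in> borel_measurable (PiM (insert a ?I) (\<lambda>_. lborel))"
      unfolding ins using Sm by (simp add: lebk_def)
  qed auto
  also have "\<dots> = (\<integral>\<^sup>+x. 0 \<partial>PiM ?I (\<lambda>_. lborel :: (real^'d) measure))"
  proof (rule nn_integral_cong)
    fix x assume x: "x \<in> space (PiM ?I (\<lambda>_. lborel :: (real^'d) measure))"
    have "(\<integral>\<^sup>+y. indicator ?S (x(a:=y)) \<partial>lborel) = (\<integral>\<^sup>+y. indicator {y. g y = g (x b)} y \<partial>lborel)"
      using ab x by (intro nn_integral_cong) (auto simp: space_lebk space_PiM PiE_iff extensional_def split: split_indicator)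
    also have "\<dots> = 0" using null[of "g (x b)"] by (simp add: null_sets_def)
    finally show "(\<integral>\<^sup>+y. indicator ?S (x(a:=y)) \<partial>lborel) = 0" .
  qed
  finally show ?thesis using Sm by (simp add: null_sets_def)
qed

lemma comp_lebk: "i \<in> {..<k} \<Longrightarrow> (\<lambda>x. x i) \<in> measurable (lebk k) (borel :: (real^'d) measure)"
  using measurable_component_singleton[of i "{..<k}" "\<lambda>_. lborel :: (real^'d) measure"]
  by (simp add: lebk_def)

lemma comp_lebk': "i \<in> {..<k} \<Longrightarrow> (\<lambda>x. x i) \<in> measurable (PiM {..<k} (\<lambda>i. borel)) (borel :: (real^'d) measure)"
  using measurable_component_singleton[of i "{..<k}" "\<lambda>_. borel :: (real^'d) measure"]
  by simp

lemma E_meas: fixes g :: "real^'d \<Rightarrow> real"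
  assumes [measurable]: "g \<in> borel_measurable borel" "a < N"
  shows "{xs \<in> space (lebk N). \<forall>b\<in>{..<N}. g (xs a) \<le> g (xs b)} \<in> sets (lebk N)"
proof -
  have "Measurable.pred (lebk N) (\<lambda>xs. \<forall>b\<in>{..<N}. g (xs a) \<le> g (xs b))"
  proof (rule pred_intros_finite(3))
    fix b assume "b \<in> {..<N}"
    have [measurable]: "(\<lambda>x. g (x b)) \<in> borel_measurable (lebk N)" "(\<lambda>x. g (x a)) \<in> borel_measurable (lebk N)"
      using measurable_compose[OF comp_lebk assms(1)] \<open>b \<in> {..<N}\<close> assms(2) by auto
    show "Measurable.pred (lebk N) (\<lambda>xs. g (xs a) \<le> g (xs b))"
      unfolding pred_def by (rule borel_measurable_le) fact+
  qed simp
  then show ?thesis by measurable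
qed

lemma sym_min:
  fixes h :: "(nat \<Rightarrow> real^'d) \<Rightarrow> ennreal" and g :: "real^'d \<Rightarrow> real" and K :: nat
  assumes gm[measurable]: "g \<in> borel_measurable borel" and null: "\<And>c. {y. g y = c} \<in> null_sets lborel"
    and hm[measurable]: "h \<in> borel_measurable (lebk (Suc K))"
    and hsym: "\<And>a xs. a < Suc K \<Longrightarrow> xs \<in> space (lebk (Suc K)) \<Longrightarrow>
        h (\<lambda>i\<in>{..<Suc K}. xs (Transposition.transpose a K i)) = h xs"
  shows "(\<integral>\<^sup>+xs. h xs \<partial>lebk (Suc K)) =
    of_nat (Suc K) * (\<integral>\<^sup>+xs. h xs * indicator {xs. \<forall>b\<in>{..<Suc K}. g (xs K) \<le> g (xs b)} xs \<partial>lebk (Suc K))"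
proof -
  define N where "N = Suc K"
  have KN: "K < N" by (simp add: N_def)
  define E where "E a = {xs \<in> space (lebk N). \<forall>b\<in>{..<N}. g (xs a) \<le> g (xs b)}" for a
  have Em[measurable]: "a < N \<Longrightarrow> E a \<in> sets (lebk N)" for a
    unfolding E_def by (rule E_meas) (use gm in auto)
  have AE1: "AE xs in lebk N. \<forall>a\<in>{..<N}. \<forall>b\<in>{..<N}. a \<noteq> b \<longrightarrow> g (xs a) \<noteq> g (xs b)"
  proof (intro eventually_ball_finite ballI finite_lessThan)
    fix a b assume "a \<in> {..<N}" "b \<in> {..<N}"
    show "AE xs in lebk N. a \<noteq> b \<longrightarrow> g (xs a) \<noteq> g (xs b)"
    proof (cases "a = b")
      case False
      have "AE xs in lebk N. xs \<notin> {xs \<in> space (lebk N). g (xs a) = g (xs b)}"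
        by (rule AE_not_in, rule ties_null) (use False \<open>a \<in> {..<N}\<close> \<open>b \<in> {..<N}\<close> null in auto)
      with AE_space show ?thesis by eventually_elim auto
    qed simp
  qed
  have AE2: "AE xs in lebk N. (\<Sum>a<N. indicator (E a) xs :: ennreal) = 1"
    using AE1 AE_space
  proof eventually_elim
    case (elim xs)
    define m where "m = Min ((\<lambda>b. g (xs b)) ` {..<N})"
    have "m \<in> (\<lambda>b. g (xs b)) ` {..<N}" unfolding m_def using KN by (intro Min_in) auto
    then obtain a0 where a0: "a0 < N" "g (xs a0) = m" by auto
    have mle: "\<And>b. b < N \<Longrightarrow> m \<le> g (xs b)" unfolding m_def by (intro Min_le) auto
    have in0: "xs \<in> E a0" using elim a0 mle by (auto simp: E_def)
    have notin: "xs \<notin> E a" if "a < N" "a \<noteq> a0" for a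
    proof
      assume "xs \<in> E a"
      then have "g (xs a) \<le> g (xs a0)" using a0 by (auto simp: E_def)
      moreover have "g (xs a0) \<le> g (xs a)" using a0 mle that by auto
      ultimately show False using elim that a0 by force
    qed
    have "(\<Sum>a<N. indicator (E a) xs :: ennreal) = indicator (E a0) xs + (\<Sum>a\<in>{..<N}-{a0}. indicator (E a) xs)"
      using a0 by (subst sum.remove[of _ a0]) auto
    also have "\<dots> = 1" using in0 notin by (auto intro!: sum.neutral)
    finally show ?case .
  qed
  have perm: "(\<integral>\<^sup>+xs. h xs * indicator (E a) xs \<partial>lebk N) = (\<integral>\<^sup>+xs. h xs * indicator (E K) xs \<partial>lebk N)"
    if a: "a < N" for a
  proof -
    have Ea[measurable]: "E a \<in> sets (lebk (Suc K))" using Em[OF a] by (simp add: N_def)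
    let ?tau = "Transposition.transpose a K"
    let ?t = "\<lambda>xs::nat\<Rightarrow>real^'d. \<lambda>i\<in>{..<N}. xs (?tau i)"
    have tK: "?tau i < N" if "i < N" for i
      using that a KN by (auto simp: Transposition.transpose_def)
    have tt: "?tau (?tau i) = i" for i by (auto simp: Transposition.transpose_def)
    have tm: "?t \<in> measurable (lebk N) (lebk N)" unfolding lebk_def
      by (intro measurable_restrict measurable_component_singleton) (auto simp: tK)
    have "(\<integral>\<^sup>+xs. h xs * indicator (E a) xs \<partial>lebk N) =
        (\<integral>\<^sup>+xs. h xs * indicator (E a) xs \<partial>distr (lebk N) (lebk N) ?t)"
    proof -
      have eq: "distr (lebk N) (lebk N) ?t = lebk N" using lebk_swap[of a N K] a KN by blast
      show ?thesis by (simp only: eq)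
    qed
    also have "\<dots> = (\<integral>\<^sup>+xs. h (?t xs) * indicator (E a) (?t xs) \<partial>lebk N)"
      using a by (intro nn_integral_distr tm) (unfold N_def, measurable)
    also have "\<dots> = (\<integral>\<^sup>+xs. h xs * indicator (E K) xs \<partial>lebk N)"
    proof (intro nn_integral_cong)
      fix xs :: "nat \<Rightarrow> real^'d" assume xs: "xs \<in> space (lebk N)"
      have h: "h (?t xs) = h xs" using hsym[of a xs] a xs by (simp add: N_def)
      have txs: "?t xs \<in> space (lebk N)" using measurable_space[OF tm xs] .
      have "(?t xs \<in> E a) \<longleftrightarrow> (xs \<in> E K)"
      proof -
        have "(?t xs \<in> E a) \<longleftrightarrow> (\<forall>b\<in>{..<N}. g (xs K) \<le> g (xs (?tau b)))"
          using txs a by (auto simp: E_def Transposition.transpose_def)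
        also have "\<dots> \<longleftrightarrow> (\<forall>b\<in>{..<N}. g (xs K) \<le> g (xs b))"
          using tK tt by (metis lessThan_iff)
        finally show ?thesis using xs by (simp add: E_def)
      qed
      then show "h (?t xs) * indicator (E a) (?t xs) = h xs * indicator (E K) xs"
        using h by (simp split: split_indicator)
    qed
    finally show ?thesis .
  qed
  have "(\<integral>\<^sup>+xs. h xs \<partial>lebk N) = (\<integral>\<^sup>+xs. h xs * (\<Sum>a<N. indicator (E a) xs) \<partial>lebk N)"
    using AE2 by (intro nn_integral_cong_AE) (auto elim!: eventually_mono)
  also have "\<dots> = (\<integral>\<^sup>+xs. (\<Sum>a<N. h xs * indicator (E a) xs) \<partial>lebk N)"
    by (simp add: sum_distrib_left)
  also have "\<dots> = (\<Sum>a<N. \<integral>\<^sup>+xs. h xs * indicator (E a) xs \<partial>lebk N)"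
  proof (intro nn_integral_sum)
    fix a assume "a \<in> {..<N}"
    then have [measurable]: "E a \<in> sets (lebk (Suc K))" using Em by (auto simp: N_def)
    show "(\<lambda>x. h x * indicator (E a) x) \<in> borel_measurable (lebk N)" unfolding N_def by measurable
  qed
  also have "\<dots> = (\<Sum>a<N. \<integral>\<^sup>+xs. h xs * indicator (E K) xs \<partial>lebk N)"
    using perm by (intro sum.cong) auto
  also have "\<dots> = of_nat N * (\<integral>\<^sup>+xs. h xs * indicator (E K) xs \<partial>lebk N)" by simp
  also have "(\<integral>\<^sup>+xs. h xs * indicator (E K) xs \<partial>lebk N) =
      (\<integral>\<^sup>+xs. h xs * indicator {xs. \<forall>b\<in>{..<Suc K}. g (xs K) \<le> g (xs b)} xs \<partial>lebk N)"
    by (intro nn_integral_cong) (auto simp: E_def N_def split: split_indicator)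
  finally show ?thesis by (simp add: N_def)
qed

lemma gw_insert:
  "gibbs_weight \<phi> (Suc K) (ys(K := x)) = gibbs_weight \<phi> K ys * (\<Prod>i<K. boltz \<phi> (ys i - x))"
proof -
  have *: "{i<..<Suc K} = insert K {i<..<K}" if "i < K" for i using that by auto
  have "gibbs_weight \<phi> (Suc K) (ys(K := x)) =
      (\<Prod>i<K. \<Prod>m\<in>{i<..<Suc K}. boltz \<phi> ((ys(K := x)) i - (ys(K := x)) m))"
    by (simp add: gibbs_weight_def)
  also have "\<dots> = (\<Prod>i<K. boltz \<phi> (ys i - x) * (\<Prod>m\<in>{i<..<K}. boltz \<phi> (ys i - ys m)))"
    by (intro prod.cong refl) (simp add: *)
  also have "\<dots> = gibbs_weight \<phi> K ys * (\<Prod>i<K. boltz \<phi> (ys i - x))"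
    by (simp add: gibbs_weight_def prod.distrib mult.commute)
  finally show ?thesis .
qed

lemma gw_sq:
  fixes xs :: "nat \<Rightarrow> 'a::ab_group_add"
  assumes sym: "\<forall>x. \<phi> (- x) = \<phi> x"
  shows "(gibbs_weight \<phi> N xs)^2 = (\<Prod>p\<in>{p. fst p < N \<and> snd p < N \<and> fst p \<noteq> snd p}. boltz \<phi> (xs (fst p) - xs (snd p)))"
proof -
  let ?b = "\<lambda>i m. boltz \<phi> (xs i - xs m)"
  have D: "{p. fst p < N \<and> snd p < N \<and> fst p \<noteq> snd p} = Sigma {..<N} (\<lambda>i. {..<i} \<union> {i<..<N})"
    by auto
  have "(\<Prod>p\<in>{p. fst p < N \<and> snd p < N \<and> fst p \<noteq> snd p}. ?b (fst p) (snd p))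
      = (\<Prod>i<N. \<Prod>m\<in>{..<i} \<union> {i<..<N}. ?b i m)"
    unfolding D by (subst prod.Sigma) (auto simp: split_def)
  also have "\<dots> = (\<Prod>i<N. (\<Prod>m<i. ?b i m) * (\<Prod>m\<in>{i<..<N}. ?b i m))"
    by (intro prod.cong refl prod.union_disjoint) auto
  also have "\<dots> = (\<Prod>i<N. \<Prod>m<i. ?b i m) * gibbs_weight \<phi> N xs"
    by (simp add: prod.distrib gibbs_weight_def)
  also have "(\<Prod>i<N. \<Prod>m<i. ?b i m) = gibbs_weight \<phi> N xs"
  proof (cases N)
    case 0 then show ?thesis by (simp add: gibbs_weight_def)
  next
    case (Suc N')
    have "(\<Prod>i<N. \<Prod>m<i. ?b i m) = (\<Prod>i\<le>N'. \<Prod>m<i. ?b i m)"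
      using Suc lessThan_Suc_atMost by simp
    also have "\<dots> = (\<Prod>m<N'. \<Prod>i\<in>{Suc m..N'}. ?b i m)"
      by (rule prod.nested_swap')
    also have "\<dots> = (\<Prod>m<N. \<Prod>i\<in>{m<..<N}. ?b m i)"
    proof -
      have "(\<Prod>m<N'. \<Prod>i\<in>{Suc m..N'}. ?b i m) = (\<Prod>m<N'. \<Prod>i\<in>{m<..<N}. ?b m i)"
      proof (rule prod.cong[OF refl])
        fix m assume "m \<in> {..<N'}"
        have "{Suc m..N'} = {m<..<N}" using Suc by auto
        then show "(\<Prod>i\<in>{Suc m..N'}. ?b i m) = (\<Prod>i\<in>{m<..<N}. ?b m i)"
          using boltz_sym[OF sym] by simp
      qed
      also have "\<dots> = (\<Prod>m<N. \<Prod>i\<in>{m<..<N}. ?b m i)"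
      proof -
        have "{N'<..<Suc N'} = {}" by auto
        then show ?thesis using Suc by simp
      qed
      finally show ?thesis .
    qed
    finally show ?thesis by (simp add: gibbs_weight_def)
  qed
  finally show ?thesis by (simp add: power2_eq_square)
qed

lemma gw_swap:
  fixes xs :: "nat \<Rightarrow> 'a::ab_group_add"
  assumes sym: "\<forall>x. \<phi> (- x) = \<phi> x" and ab: "a < N" "b < N"
  shows "gibbs_weight \<phi> N (\<lambda>i\<in>{..<N}. xs (Transposition.transpose a b i)) = gibbs_weight \<phi> N xs"
proof -
  let ?tau = "Transposition.transpose a b"
  let ?D = "{p. fst p < N \<and> snd p < N \<and> fst p \<noteq> snd p}"
  let ?ys = "\<lambda>i\<in>{..<N}. xs (?tau i)"
  have tK: "?tau i < N" if "i < N" for i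
    using that ab by (auto simp: Transposition.transpose_def)
  have tt: "?tau (?tau i) = i" for i by (auto simp: Transposition.transpose_def)
  have bij: "bij_betw (\<lambda>p. (?tau (fst p), ?tau (snd p))) ?D ?D"
  proof (rule bij_betwI[where g = "\<lambda>p. (?tau (fst p), ?tau (snd p))"])
    show "(\<lambda>p. (?tau (fst p), ?tau (snd p))) \<in> ?D \<rightarrow> ?D"
      using tK by (auto simp: Transposition.transpose_def)
  qed (use tK tt in \<open>auto simp: Transposition.transpose_def\<close>)
  have "(gibbs_weight \<phi> N ?ys)^2 = (\<Prod>p\<in>?D. boltz \<phi> (?ys (fst p) - ?ys (snd p)))"
    by (rule gw_sq[OF sym])
  also have "\<dots> = (\<Prod>p\<in>?D. boltz \<phi> (xs (?tau (fst p)) - xs (?tau (snd p))))"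
    by (intro prod.cong) auto
  also have "\<dots> = (\<Prod>p\<in>?D. boltz \<phi> (xs (fst p) - xs (snd p)))"
    using prod.reindex_bij_betw[OF bij, of "\<lambda>p. boltz \<phi> (xs (fst p) - xs (snd p))"] by simp
  also have "\<dots> = (gibbs_weight \<phi> N xs)^2"
    by (rule gw_sq[OF sym, symmetric])
  finally have "(gibbs_weight \<phi> N ?ys)^2 = (gibbs_weight \<phi> N xs)^2" .
  then show ?thesis
    by (rule power2_eq_imp_eq) (simp_all add: gw_nonneg)
qed

lemma hyper_null: "{y::real^'d. y$j = c} \<in> null_sets lborel"
proof -
  have "negligible {y::real^'d. y \<bullet> axis j 1 = c}" by (rule negligible_standard_hyperplane) simp
  then have "negligible {y::real^'d. y$j = c}" by (simp add: cart_eq_inner_axis)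
  then have "{y::real^'d. y$j = c} \<in> null_sets lebesgue" by (simp add: negligible_iff_null_sets)
  moreover have "{y::real^'d. y$j = c} \<in> sets lborel" by measurable
  ultimately show ?thesis using null_sets_completion_iff by blast
qed

lemma hyper_null': "{y::real^'d. - (y$j) = c} \<in> null_sets lborel"
proof -
  have "{y::real^'d. - (y$j) = c} = {y::real^'d. y$j = - c}" by auto
  then show ?thesis using hyper_null by metis
qed

lemma cube_box: "cube n = cbox (\<chi> i. - real n) (\<chi> i. real n :: real^'d)"
  by (auto simp: cube_def mem_box_cart)

lemma cube_meas[measurable]: "(cube n :: (real^'d) set) \<in> sets borel"
  unfolding cube_box by simp

lemma cube_fin: "emeasure lborel (cube n :: (real^'d) set) < \<infinity>"
  unfolding cube_box by (rule emeasure_lborel_cbox_finite)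

lemma act_meas[measurable]: "(\<lambda>p. act_t l n j (f p) (g p)) \<in> borel_measurable M"
  if [measurable]: "f \<in> borel_measurable M" "g \<in> borel_measurable M"
proof -
  have "(\<lambda>p. act_t l n j (f p) (g p)) = (\<lambda>p. l * indicator (cube n) (g p) * (if f p \<le> g p $ j then 1 else 0))"
    by (auto simp: act_t_def indicator_def fun_eq_iff)
  moreover have [measurable]: "(\<lambda>p. g p $ j) \<in> borel_measurable M"
    by (rule measurable_compose[OF _ borel_measurable_nth]) simp
  moreover have [measurable]: "(\<lambda>p. indicator (cube n) (g p) :: real) \<in> borel_measurable M"
    by (rule measurable_compose[OF that(2) borel_measurable_indicator[OF cube_meas]])
  ultimately show ?thesis by simp
qed

lemma act_nonneg: "l \<ge> 0 \<Longrightarrow> 0 \<le> act_t l n j t y" by (simp add: act_t_def)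
lemma act_le: "l \<ge> 0 \<Longrightarrow> act_t l n j t y \<le> l * indicator (cube n) y"
  by (simp add: act_t_def indicator_def)

lemma emeasure_cubes: "emeasure (lebk k) (PiE {..<k} (\<lambda>_. cube n :: (real^'d) set)) = emeasure lborel (cube n :: (real^'d) set) ^ k"
  unfolding lebk_def by (subst lb.emeasure_PiM) auto

lemma jan_integrable:
  fixes lam :: "real^'d \<Rightarrow> real" and F :: "(nat \<Rightarrow> real^'d) \<Rightarrow> real"
  assumes [measurable]: "lam \<in> borel_measurable borel" "\<phi> \<in> borel_measurable borel"
    and lb: "\<And>y. 0 \<le> lam y \<and> lam y \<le> l * indicator (cube n) y"
    and Fm[measurable]: "F \<in> borel_measurable (lebk k)" and Fb: "\<And>xs. \<bar>F xs\<bar> \<le> 1"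
    and phinn: "\<forall>x. \<phi> x \<ge> 0" and l0: "0 \<le> l"
  shows "integrable (lebk k) (\<lambda>xs. (\<Prod>i<k. lam (xs i)) * gibbs_weight \<phi> k xs * F xs)"
    and "\<bar>\<integral>xs. (\<Prod>i<k. lam (xs i)) * gibbs_weight \<phi> k xs * F xs \<partial>lebk k\<bar> \<le> (l * measure lborel (cube n :: (real^'d) set)) ^ k"
proof -
  let ?C = "PiE {..<k} (\<lambda>_. cube n :: (real^'d) set)"
  have Cm: "?C \<in> sets (lebk k)" unfolding lebk_def by (rule sets_PiM_I_finite) auto
  have Cf: "emeasure (lebk k) ?C < \<infinity>"
    unfolding emeasure_cubes using cube_fin[of n, where 'd='d] by (simp add: power_less_top_ennreal infinity_ennreal_def)
  have gi: "integrable (lebk k) (\<lambda>xs. l^k * indicator ?C xs)"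
    using Cm Cf by simp
  have pm[measurable]: "(\<lambda>xs. (\<Prod>i<k. lam (xs i))) \<in> borel_measurable (lebk k)"
    by (intro borel_measurable_prod) (rule measurable_compose[OF comp_lebk], auto)
  have bnd: "\<bar>(\<Prod>i<k. lam (xs i)) * gibbs_weight \<phi> k xs * F xs\<bar> \<le> l^k * indicator ?C xs"
    if xs: "xs \<in> space (lebk k)" for xs
  proof -
    have "\<bar>(\<Prod>i<k. lam (xs i)) * gibbs_weight \<phi> k xs * F xs\<bar>
        = (\<Prod>i<k. lam (xs i)) * gibbs_weight \<phi> k xs * \<bar>F xs\<bar>"
      using lb gw_nonneg[of \<phi> k xs] by (simp add: abs_mult prod_nonneg abs_prod)
    also have "\<dots> \<le> (\<Prod>i<k. lam (xs i)) * 1 * 1"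
      using lb gw_nonneg gw_le1[OF phinn] Fb
      by (intro mult_mono) (auto simp: prod_nonneg)
    also have "\<dots> \<le> (\<Prod>i<k. l * indicator (cube n) (xs i))"
      using lb by (simp add: prod_mono)
    also have "\<dots> = l^k * indicator ?C xs"
      using xs by (auto simp: prod.distrib indicator_def space_lebk PiE_iff prod_zero_iff)
    finally show ?thesis .
  qed
  show int: "integrable (lebk k) (\<lambda>xs. (\<Prod>i<k. lam (xs i)) * gibbs_weight \<phi> k xs * F xs)"
    apply (rule Bochner_Integration.integrable_bound[OF gi])
     apply (measurable; fail)
    using bnd l0 by (auto intro!: AE_I2 simp: abs_mult)
  have "\<bar>\<integral>xs. (\<Prod>i<k. lam (xs i)) * gibbs_weight \<phi> k xs * F xs \<partial>lebk k\<bar>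
      \<le> (\<integral>xs. \<bar>(\<Prod>i<k. lam (xs i)) * gibbs_weight \<phi> k xs * F xs\<bar> \<partial>lebk k)"
    by (rule integral_abs_bound)
  also have "\<dots> \<le> (\<integral>xs. l^k * indicator ?C xs \<partial>lebk k)"
    by (rule integral_mono[OF integrable_abs[OF int] gi bnd])
  also have "\<dots> = l^k * measure (lebk k) ?C" using Cm by (simp add: Int_absorb2 sets.sets_into_space)
  also have "measure (lebk k) ?C = measure lborel (cube n :: (real^'d) set) ^ k"
  proof -
    obtain V0 where e: "emeasure lborel (cube n :: (real^'d) set) = ennreal V0" "V0 \<ge> 0"
      using cube_fin[of n, where 'd='d] by (auto simp: less_top_ennreal infinity_ennreal_def)
    then have "measure lborel (cube n :: (real^'d) set) = V0" by (simp add: measure_def)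
    moreover have "measure (lebk k) ?C = V0^k"
      using e by (simp add: measure_def emeasure_cubes ennreal_power)
    ultimately show ?thesis by simp
  qed
  finally show "\<bar>\<integral>xs. (\<Prod>i<k. lam (xs i)) * gibbs_weight \<phi> k xs * F xs \<partial>lebk k\<bar> \<le> (l * measure lborel (cube n :: (real^'d) set)) ^ k"
    by (simp add: power_mult_distrib)
qed

lemma lnser:
  fixes M :: real assumes M0: "0 \<le> M"
  shows "(\<lambda>m. (M/(1+M))^(Suc m) / real (Suc m)) sums ln (1+M)"
proof -
  define q where "q = M/(1+M)"
  have q0: "0 \<le> q" and q1: "q < 1" using M0 by (auto simp: q_def field_simps)
  have sg: "summable (\<lambda>m. q^(Suc m))"
    using summable_geometric[of q] q0 q1 by (simp add: summable_mult)
  have s: "summable (\<lambda>m. q^(Suc m) / real (Suc m))"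
  proof (rule summable_comparison_test'[OF sg])
    fix m :: nat
    have "q^(Suc m) / real (Suc m) \<le> q^(Suc m)" using q0 by (simp add: divide_le_eq field_simps)
    then show "norm (q^(Suc m) / real (Suc m)) \<le> q^(Suc m)" using q0 by simp
  qed
  have x: "0 < 1/(1+M)" "1/(1+M) < (2::real)" using M0 by (auto simp: field_simps)
  have "ln (1/(1+M)) = (\<Sum>n. (-1)^n * (1 / real (n + 1)) * (1/(1+M) - 1)^(Suc n))"
    by (rule ln_series[OF x])
  also have "\<dots> = (\<Sum>n. - (q^(Suc n) / real (Suc n)))"
  proof (intro suminf_cong)
    fix n :: nat
    have "1/(1+M) - 1 = - q" using M0 by (simp add: q_def field_simps)
    moreover have "(-1)^n * (1 / real (n + 1)) * (- q)^(Suc n) = - (q^(Suc n) / real (Suc n))"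
    proof -
      have "(-1::real)^n * (-1)^(Suc n) = -1"
        by (simp add: power_add[symmetric])
      then have "(-1::real)^n * ((- q)^(Suc n)) = - (q^(Suc n))"
        by (simp only: power_minus[of q] mult.assoc[symmetric])
      then show ?thesis by (metis (no_types, lifting) minus_divide_left mult.commute times_divide_eq_right mult_1 of_nat_Suc Suc_eq_plus1 add.commute)

    qed
    ultimately show "(-1)^n * (1 / real (n + 1)) * (1/(1+M) - 1)^(Suc n) = - (q^(Suc n) / real (Suc n))"
      by simp
  qed
  also have "\<dots> = - (\<Sum>n. q^(Suc n) / real (Suc n))"
    by (rule suminf_minus[OF s])
  finally have "(\<Sum>n. q^(Suc n) / real (Suc n)) = ln (1+M)"
    using M0 by (simp add: ln_div)
  then show ?thesis using s q_def by (metis summable_sums)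
qed

lemma moment:
  fixes f :: "real^'d \<Rightarrow> real" and j :: 'd and m :: nat
  assumes fm[measurable]: "f \<in> borel_measurable borel" and f0: "\<And>x. 0 \<le> f x" and fi: "integrable lborel f"
  shows "(\<integral>\<^sup>+x. ennreal (f x * (\<integral>y. f y * indicator {y. y$j \<le> x$j} y \<partial>lborel) ^ m) \<partial>lborel)
     = ennreal ((\<integral>y. f y \<partial>lborel) ^ Suc m / real (Suc m))"
proof -
  define M where "M = (\<integral>y. f y \<partial>lborel)"
  define G where "G t = (\<integral>y. f y * indicator {y. y$j \<le> t} y \<partial>lborel)" for t
  have xj[measurable]: "(\<lambda>y::real^'d. y $ j) \<in> borel_measurable borel" by simp
  have Fi: "integrable lborel (\<lambda>y. f y * indicator {y. y$j \<le> t} y)" for t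
    by (rule Bochner_Integration.integrable_bound[OF fi]) (auto simp: f0 indicator_def)
  have G0: "0 \<le> G t" for t unfolding G_def by (intro Bochner_Integration.integral_nonneg) (simp add: f0)
  have M0: "0 \<le> M" unfolding M_def by (intro Bochner_Integration.integral_nonneg) (simp add: f0)
  let ?F1 = "\<lambda>t y. ennreal (f y * indicator {y. y$j \<le> t} y)"
  have eG: "ennreal (G t) = (\<integral>\<^sup>+y. ?F1 t y \<partial>lborel)" for t
    unfolding G_def by (rule nn_integral_eq_integral[symmetric]) (use Fi f0 in auto)
  define P where "P t ys = (\<Prod>i<m. ?F1 t (ys i))" for t ys
  have Pm: "(\<lambda>ys. P t ys) \<in> borel_measurable (lebk m)" for t
    unfolding P_def
    by (intro borel_measurable_prod_ennreal) (rule measurable_compose[OF comp_lebk], simp, measurable)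
  have pow: "ennreal (G t ^ m) = (\<integral>\<^sup>+ys. P t ys \<partial>lebk m)" for t
  proof -
    have "ennreal (G t ^ m) = ennreal (G t) ^ m" using G0 by (simp add: ennreal_power)
    also have "\<dots> = (\<Prod>i<m. \<integral>\<^sup>+y. ?F1 t y \<partial>lborel)" by (simp add: eG)
    also have "\<dots> = (\<integral>\<^sup>+ys. P t ys \<partial>lebk m)"
      unfolding P_def lebk_def by (rule lb.product_nn_integral_prod[symmetric]) auto
    finally show ?thesis .
  qed
  define E where "E = {xs::nat\<Rightarrow>real^'d. \<forall>b\<in>{..<Suc m}. - (xs m $ j) \<le> - (xs b $ j)}"
  define h where "h xs = (\<Prod>i<Suc m. ennreal (f (xs i)))" for xs :: "nat \<Rightarrow> real^'d"
  have hm[measurable]: "h \<in> borel_measurable (lebk (Suc m))"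
    unfolding h_def
    by (intro borel_measurable_prod_ennreal) (rule measurable_compose[OF comp_lebk], simp, measurable)
  have Em: "E \<inter> space (lebk (Suc m)) \<in> sets (lebk (Suc m))"
  proof -
    have "E \<inter> space (lebk (Suc m)) = {xs \<in> space (lebk (Suc m)). \<forall>b\<in>{..<Suc m}. - (xs m $ j) \<le> - (xs b $ j)}"
      by (auto simp: E_def)
    also have "\<dots> \<in> sets (lebk (Suc m))" by (rule E_meas) auto
    finally show ?thesis .
  qed
  have hEm: "(\<lambda>xs. h xs * indicator E xs) \<in> borel_measurable (lebk (Suc m))"
  proof -
    have "(\<lambda>xs. h xs * indicator E xs) \<in> borel_measurable (lebk (Suc m))
      \<longleftrightarrow> (\<lambda>xs. h xs * indicator (E \<inter> space (lebk (Suc m))) xs) \<in> borel_measurable (lebk (Suc m))"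
      by (intro measurable_cong) (auto split: split_indicator)
    also have "\<dots>" using Em by measurable
    finally show ?thesis .
  qed
  have "(\<integral>\<^sup>+x. ennreal (f x * G (x$j) ^ m) \<partial>lborel) = (\<integral>\<^sup>+x. ennreal (f x) * (\<integral>\<^sup>+ys. P (x$j) ys \<partial>lebk m) \<partial>lborel)"
    using f0 G0 by (intro nn_integral_cong) (simp add: ennreal_mult pow)
  also have "\<dots> = (\<integral>\<^sup>+x. (\<integral>\<^sup>+ys. ennreal (f x) * P (x$j) ys \<partial>lebk m) \<partial>lborel)"
    by (intro nn_integral_cong nn_integral_cmult[symmetric] Pm)
  also have "\<dots> = (\<integral>\<^sup>+x. (\<integral>\<^sup>+ys. h (ys(m:=x)) * indicator E (ys(m:=x)) \<partial>lebk m) \<partial>lborel)"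
  proof (intro nn_integral_cong)
    fix x :: "real^'d" and ys :: "nat \<Rightarrow> real^'d"
    have hx: "h (ys(m:=x)) = ennreal (f x) * (\<Prod>i<m. ennreal (f (ys i)))"
      unfolding h_def by (simp add: lessThan_Suc mult.commute)
    show "ennreal (f x) * P (x$j) ys = h (ys(m:=x)) * indicator E (ys(m:=x))"
    proof (cases "\<forall>b<m. ys b $ j \<le> x $ j")
      case True
      then have "P (x$j) ys = (\<Prod>i<m. ennreal (f (ys i)))"
        unfolding P_def by (intro prod.cong) (auto simp: indicator_def)
      moreover have "ys(m:=x) \<in> E" using True by (auto simp: E_def less_Suc_eq)
      ultimately show ?thesis using hx by simp
    next
      case False
      then obtain b where b: "b < m" "\<not> ys b $ j \<le> x $ j" by auto
      have "P (x$j) ys = ?F1 (x$j) (ys b) * (\<Prod>i\<in>{..<m}-{b}. ?F1 (x$j) (ys i))"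
        unfolding P_def using b by (subst prod.remove[of _ b]) auto
      also have "?F1 (x$j) (ys b) = 0" using b by (simp add: indicator_def)
      finally have P0: "P (x$j) ys = 0" by simp
      have nE: "ys(m:=x) \<notin> E" using b by (auto simp: E_def less_Suc_eq)
      have "indicator E (ys(m:=x)) = (0::ennreal)" using nE by (rule indicator_simps(2))
      then show ?thesis using P0 by simp
    qed
  qed
  also have "\<dots> = (\<integral>\<^sup>+xs. h xs * indicator E xs \<partial>lebk (Suc m))"
    unfolding lebk_def lessThan_Suc
    by (rule lb.product_nn_integral_insert_rev[symmetric]) (use hEm in \<open>auto simp: lebk_def lessThan_Suc\<close>)
  finally have X: "(\<integral>\<^sup>+x. ennreal (f x * G (x$j) ^ m) \<partial>lborel) = (\<integral>\<^sup>+xs. h xs * indicator E xs \<partial>lebk (Suc m))" .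
  have sm: "(\<integral>\<^sup>+xs. h xs \<partial>lebk (Suc m)) = of_nat (Suc m) * (\<integral>\<^sup>+xs. h xs * indicator E xs \<partial>lebk (Suc m))"
    unfolding E_def
  proof (rule sym_min[where g = "\<lambda>y. - (y $ j)"])
    show "\<And>c. {y::real^'d. - (y $ j) = c} \<in> null_sets lborel" by (rule hyper_null')
    fix b xs assume b: "b < Suc m"
    have bij: "bij_betw (Transposition.transpose b m) {..<Suc m} {..<Suc m}"
      using permutes_swap_id[of b "{..<Suc m}" m] b permutes_imp_bij by auto
    have "h (\<lambda>i\<in>{..<Suc m}. xs (Transposition.transpose b m i)) = (\<Prod>i<Suc m. ennreal (f (xs (Transposition.transpose b m i))))"
      unfolding h_def by (intro prod.cong) auto
    also have "\<dots> = h xs"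
      unfolding h_def using prod.reindex_bij_betw[OF bij, of "\<lambda>i. ennreal (f (xs i))"] by simp
    finally show "h (\<lambda>i\<in>{..<Suc m}. xs (Transposition.transpose b m i)) = h xs" .
  qed (simp_all add: hm)
  have hint: "(\<integral>\<^sup>+xs. h xs \<partial>lebk (Suc m)) = ennreal (M ^ Suc m)"
  proof -
    have "(\<integral>\<^sup>+xs. h xs \<partial>lebk (Suc m)) = (\<Prod>i<Suc m. \<integral>\<^sup>+y. ennreal (f y) \<partial>lborel)"
      unfolding h_def lebk_def by (rule lb.product_nn_integral_prod) auto
    also have "(\<integral>\<^sup>+y. ennreal (f y) \<partial>lborel) = ennreal M"
      unfolding M_def by (rule nn_integral_eq_integral) (use fi f0 in auto)
    finally show ?thesis using M0 by (simp add: ennreal_power ennreal_mult zero_le_power)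
  qed
  obtain r where r: "(\<integral>\<^sup>+xs. h xs * indicator E xs \<partial>lebk (Suc m)) = ennreal r" "0 \<le> r"
  proof (cases "(\<integral>\<^sup>+xs. h xs * indicator E xs \<partial>lebk (Suc m))")
    case (real r) then show ?thesis using that by auto
  next
    case top
    then have "(\<integral>\<^sup>+xs. h xs \<partial>lebk (Suc m)) = top" using sm by (simp add: ennreal_mult_top)
    then show ?thesis using hint by simp
  qed
  have "ennreal (M ^ Suc m) = ennreal (real (Suc m) * r)"
    using sm hint r by (simp add: ennreal_mult ennreal_of_nat_eq_real_of_nat)
  then have "M ^ Suc m = real (Suc m) * r" using M0 r by (subst (asm) ennreal_inj) auto
  then have "r = M ^ Suc m / real (Suc m)" by (simp add: field_simps)
  then show ?thesis using X r unfolding G_def M_def by simp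
qed

lemma lemA:
  fixes f :: "real^'d \<Rightarrow> real" and j :: 'd
  assumes fm[measurable]: "f \<in> borel_measurable borel" and f0: "\<And>x. 0 \<le> f x" and fi: "integrable lborel f"
  shows "(\<integral>x. f x / (1 + (\<integral>y. f y * indicator {y. x$j \<le> y$j} y \<partial>lborel)) \<partial>lborel)
     = ln (1 + (\<integral>y. f y \<partial>lborel))"
proof -
  define M where "M = (\<integral>y. f y \<partial>lborel)"
  define G where "G t = (\<integral>y. f y * indicator {y. y$j \<le> t} y \<partial>lborel)" for t
  have Fi': "integrable lborel (\<lambda>y. f y * indicator {y. t \<le> y$j} y)"
    "integrable lborel (\<lambda>y. f y * indicator {y. y$j \<le> t} y)" for t
  proof -
    show "integrable lborel (\<lambda>y. f y * indicator {y. t \<le> y$j} y)"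
      by (rule Bochner_Integration.integrable_bound[OF fi]) (auto simp: f0 indicator_def)
    show "integrable lborel (\<lambda>y. f y * indicator {y. y$j \<le> t} y)"
      by (rule Bochner_Integration.integrable_bound[OF fi]) (auto simp: f0 indicator_def)
  qed
  have G0: "0 \<le> G t" for t unfolding G_def by (intro Bochner_Integration.integral_nonneg) (simp add: f0)
  have M0: "0 \<le> M" unfolding M_def by (intro Bochner_Integration.integral_nonneg) (simp add: f0)
  have GM: "G t \<le> M" for t
    unfolding G_def M_def
    by (intro Bochner_Integration.integral_mono Fi' fi) (auto simp: f0 indicator_def)
  have Gmono: "mono G"
  proof (rule monoI)
    fix s t :: real assume "s \<le> t"
    then show "G s \<le> G t" unfolding G_def
      by (intro Bochner_Integration.integral_mono Fi') (auto simp: f0 indicator_def)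
  qed
  have Gm[measurable]: "G \<in> borel_measurable borel" using Gmono by (rule borel_measurable_mono)
  have FG: "(\<integral>y. f y * indicator {y. t \<le> y$j} y \<partial>lborel) = M - G t" for t
  proof -
    have AE: "AE y in lborel. f y * indicator {y. t \<le> y$j} y + f y * indicator {y. y$j \<le> t} y = f y"
      using AE_not_in[OF hyper_null[of j t]] by eventually_elim (auto simp: indicator_def)
    have "(\<integral>y. f y * indicator {y. t \<le> y$j} y \<partial>lborel) + G t =
        (\<integral>y. f y * indicator {y. t \<le> y$j} y + f y * indicator {y. y$j \<le> t} y \<partial>lborel)"
      unfolding G_def by (rule Bochner_Integration.integral_add[symmetric]) (rule Fi')+
    also have "\<dots> = M" unfolding M_def using AE by (rule integral_cong_AE[rotated 2]) (use Fi' fi in auto)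
    finally show ?thesis by simp
  qed
  define c where "c m x = f x * G (x$j) ^ m / (1+M) ^ Suc m" for m x
  have c0: "0 \<le> c m x" for m x unfolding c_def using f0 G0 M0 by simp
  have csums: "(\<lambda>m. c m x) sums (f x / (1 + (M - G (x$j))))" for x
  proof -
    define q where "q = G (x$j) / (1+M)"
    have q: "norm q < 1" using G0[of "x$j"] GM[of "x$j"] M0 by (auto simp: q_def field_simps)
    have s0: "(\<lambda>m. (f x / (1+M)) * q^m) sums ((f x / (1+M)) * (1 / (1 - q)))"
      by (rule sums_mult[OF geometric_sums[OF q]])
    have e1: "(f x / (1+M)) * q^m = c m x" for m
      unfolding c_def q_def using M0 by (simp add: power_divide field_simps)
    have e2: "(f x / (1+M)) * (1 / (1 - q)) = f x / (1 + (M - G (x$j)))"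
    proof -
      have p: "1 + M > 0" "1 + (M - G (x$j)) > 0" using M0 GM[of "x$j"] by auto
      have "1 - q = (1 + (M - G (x$j))) / (1+M)" unfolding q_def using p by (simp add: field_simps)
      then show ?thesis using p by simp
    qed
    show ?thesis using s0 unfolding e1 e2 .
  qed
  have cm[measurable]: "c m \<in> borel_measurable borel" for m
  proof -
    have "(\<lambda>x::real^'d. G (x$j)) \<in> borel_measurable borel"
      by (rule measurable_compose[OF _ Gm]) simp
    then show ?thesis unfolding c_def by measurable
  qed
  have "(\<integral>\<^sup>+x. ennreal (f x / (1 + (M - G (x$j)))) \<partial>lborel) = (\<integral>\<^sup>+x. (\<Sum>m. ennreal (c m x)) \<partial>lborel)"
  proof (intro nn_integral_cong)
    fix x :: "real^'d"
    have "(\<Sum>m. ennreal (c m x)) = ennreal (\<Sum>m. c m x)"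
      by (rule suminf_ennreal2[OF c0 sums_summable[OF csums]])
    also have "(\<Sum>m. c m x) = f x / (1 + (M - G (x$j)))"
      by (rule sums_unique[OF csums, symmetric])
    finally show "ennreal (f x / (1 + (M - G (x$j)))) = (\<Sum>m. ennreal (c m x))" by simp
  qed
  also have "\<dots> = (\<Sum>m. \<integral>\<^sup>+x. ennreal (c m x) \<partial>lborel)"
    by (rule nn_integral_suminf) measurable
  also have "\<dots> = (\<Sum>m. ennreal ((M/(1+M))^(Suc m) / real (Suc m)))"
  proof (intro suminf_cong)
    fix m
    have "(\<integral>\<^sup>+x. ennreal (c m x) \<partial>lborel) = (\<integral>\<^sup>+x. ennreal (1 / (1+M)^Suc m) * ennreal (f x * G (x$j) ^ m) \<partial>lborel)"
      unfolding c_def using M0 f0 G0 by (intro nn_integral_cong) (simp add: ennreal_mult[symmetric])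
    also have "\<dots> = ennreal (1 / (1+M)^Suc m) * (\<integral>\<^sup>+x. ennreal (f x * G (x$j) ^ m) \<partial>lborel)"
    proof (rule nn_integral_cmult)
      have "(\<lambda>x::real^'d. G (x$j)) \<in> borel_measurable borel"
        by (rule measurable_compose[OF _ Gm]) simp
      then show "(\<lambda>x. ennreal (f x * G (x$j) ^ m)) \<in> borel_measurable lborel" by measurable
    qed
    also have "(\<integral>\<^sup>+x. ennreal (f x * G (x$j) ^ m) \<partial>lborel) = ennreal (M ^ Suc m / real (Suc m))"
      unfolding G_def M_def by (rule moment[OF fm f0 fi])
    also have "ennreal (1 / (1+M)^Suc m) * ennreal (M ^ Suc m / real (Suc m)) = ennreal ((M/(1+M))^(Suc m) / real (Suc m))"
      using M0 by (simp add: ennreal_mult[symmetric] power_divide)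
    finally show "(\<integral>\<^sup>+x. ennreal (c m x) \<partial>lborel) = ennreal ((M/(1+M))^(Suc m) / real (Suc m))" .
  qed
  also have "\<dots> = ennreal (ln (1+M))"
  proof -
    have "(\<Sum>m. ennreal ((M/(1+M))^(Suc m) / real (Suc m))) = ennreal (\<Sum>m. (M/(1+M))^(Suc m) / real (Suc m))"
      by (rule suminf_ennreal2[OF _ sums_summable[OF lnser[OF M0]]]) (use M0 in simp)
    also have "(\<Sum>m. (M/(1+M))^(Suc m) / real (Suc m)) = ln (1+M)"
      by (rule sums_unique[OF lnser[OF M0], symmetric])
    finally show ?thesis .
  qed
  finally have nn: "(\<integral>\<^sup>+x. ennreal (f x / (1 + (M - G (x$j)))) \<partial>lborel) = ennreal (ln (1+M))" .
  have "(\<integral>x. f x / (1 + (\<integral>y. f y * indicator {y. x$j \<le> y$j} y \<partial>lborel)) \<partial>lborel)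
      = (\<integral>x. f x / (1 + (M - G (x$j))) \<partial>lborel)"
    by (simp add: FG)
  also have "\<dots> = enn2real (\<integral>\<^sup>+x. ennreal (f x / (1 + (M - G (x$j)))) \<partial>lborel)"
  proof (rule integral_eq_nn_integral)
    have "(\<lambda>x::real^'d. G (x$j)) \<in> borel_measurable borel"
      by (rule measurable_compose[OF _ Gm]) simp
    then show "(\<lambda>x. f x / (1 + (M - G (x$j)))) \<in> borel_measurable lborel" by measurable
    show "AE x in lborel. 0 \<le> f x / (1 + (M - G (x$j)))"
      using f0 GM M0 by (intro AE_I2) (simp add: add_nonneg_nonneg)
  qed
  also have "\<dots> = ln (1+M)" using nn M0 by simp
  finally show ?thesis by (simp add: M_def)
qed

locale gs =
  fixes \<phi> :: "real^'d \<Rightarrow> ereal" and l :: real and n :: nat and j :: 'd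
  assumes phim[measurable]: "\<phi> \<in> borel_measurable borel"
    and phisym: "\<forall>x. \<phi> (- x) = \<phi> x"
    and phinn: "\<forall>x. \<phi> x \<ge> 0"
    and lpos: "l > 0"
begin

abbreviation "a \<equiv> act_t l n j"

definition V :: real where "V = measure lborel (cube n :: (real^'d) set)"

lemma V_nonneg: "0 \<le> V" by (simp add: V_def)

definition Q :: "nat \<Rightarrow> real^'d \<Rightarrow> (nat \<Rightarrow> real^'d) \<Rightarrow> real" where
  "Q K x ys = (\<Prod>i<K. a (x$j) (ys i)) * gibbs_weight \<phi> K ys * (\<Prod>i<K. boltz \<phi> (x - ys i))"

definition Jh :: "nat \<Rightarrow> real^'d \<Rightarrow> real" where
  "Jh K x = janossy_int \<phi> (a (x$j)) K (\<lambda>k ys. \<Prod>i<k. boltz \<phi> (x - ys i))"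

lemma Jh_Q: "Jh K x = (\<integral>ys. Q K x ys \<partial>lebk K)"
  by (simp add: Jh_def janossy_int_def Q_def)

lemma l0: "0 \<le> l" using lpos by simp

lemma a_bounds: "0 \<le> a t y \<and> a t y \<le> l * indicator (cube n) y"
  using act_nonneg[OF l0] act_le[OF l0] by auto

lemma a_meas[measurable]: "a t \<in> borel_measurable borel"
  using act_meas[of "\<lambda>_. t" borel "\<lambda>y. y"] by simp

lemma Fb_meas: "(\<lambda>ys. \<Prod>i<K. boltz \<phi> (x - ys i)) \<in> borel_measurable (lebk K)"
  by (intro borel_measurable_prod) (rule measurable_compose[OF _ boltz_meas[OF phim]], rule borel_measurable_diff, simp, rule comp_lebk, simp)

lemma Fb_bound: "\<bar>\<Prod>i<K. boltz \<phi> (x - ys i)\<bar> \<le> 1"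
  using boltz_le1[OF phinn] by (simp add: abs_prod prod_le_1)

lemma Q_integrable: "integrable (lebk K) (Q K x)"
  using jan_integrable(1)[OF a_meas phim a_bounds Fb_meas Fb_bound phinn l0]
  by (simp add: Q_def[abs_def])

lemma Q_nonneg: "0 \<le> Q K x ys"
  unfolding Q_def using a_bounds gw_nonneg by (intro mult_nonneg_nonneg prod_nonneg) auto

lemma Jh_nonneg: "0 \<le> Jh K x"
  unfolding Jh_Q by (intro Bochner_Integration.integral_nonneg Q_nonneg)

lemma Jh_le: "Jh K x \<le> (l * V) ^ K"
  using jan_integrable(2)[OF a_meas[of "x$j"] phim a_bounds Fb_meas[of x K] Fb_bound phinn l0]
  unfolding Jh_Q Q_def V_def by (auto dest: abs_le_D1)

lemma Q_meas: "(\<lambda>p. Q K (fst p) (snd p)) \<in> borel_measurable (lborel \<Otimes>\<^sub>M lebk K)"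
proof -
  have c[measurable]: "(\<lambda>p. snd p i) \<in> borel_measurable (lborel \<Otimes>\<^sub>M lebk K)" if "i < K" for i
    by (rule measurable_compose[OF measurable_snd comp_lebk]) (use that in simp)
  have xj[measurable]: "(\<lambda>p::(real^'d) \<times> _. fst p $ j) \<in> borel_measurable (lborel \<Otimes>\<^sub>M lebk K)"
    by (rule measurable_compose[OF measurable_fst]) simp
  have 1: "(\<lambda>p. \<Prod>i<K. a (fst p $ j) (snd p i)) \<in> borel_measurable (lborel \<Otimes>\<^sub>M lebk K)"
    by (intro borel_measurable_prod act_meas xj c) simp
  have 2: "(\<lambda>p. gibbs_weight \<phi> K (snd p)) \<in> borel_measurable (lborel \<Otimes>\<^sub>M lebk K)"
    by (rule measurable_compose[OF measurable_snd gw_meas[OF phim]])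
  have 3: "(\<lambda>p. \<Prod>i<K. boltz \<phi> (fst p - snd p i)) \<in> borel_measurable (lborel \<Otimes>\<^sub>M lebk K)"
    by (intro borel_measurable_prod) (rule measurable_compose[OF _ boltz_meas[OF phim]], rule borel_measurable_diff, rule measurable_compose[OF measurable_fst], simp, rule c, simp)
  show ?thesis unfolding Q_def using 1 2 3 by simp
qed

lemma Jh_meas[measurable]: "Jh K \<in> borel_measurable borel"
proof -
  interpret sf: sigma_finite_measure "lebk K :: (nat \<Rightarrow> real^'d) measure"
    unfolding lebk_def by (rule lb.sigma_finite) simp
  have "(\<lambda>x. \<integral>ys. Q K x ys \<partial>lebk K) \<in> borel_measurable lborel"
    by (rule sf.borel_measurable_lebesgue_integral) (use Q_meas in \<open>simp add: split_beta'\<close>)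
  then show ?thesis unfolding Jh_Q[abs_def] by simp
qed

lemma Jh_0: "Jh 0 x = 1"
  by (simp add: Jh_Q Q_def gibbs_weight_def lebk_def PiM_empty)

definition H :: "real \<Rightarrow> nat \<Rightarrow> (nat \<Rightarrow> real^'d) \<Rightarrow> real" where
  "H t N xs = (\<Prod>i<N. a t (xs i)) * gibbs_weight \<phi> N xs"

lemma H_meas[measurable]: "H t N \<in> borel_measurable (lebk N)"
  unfolding H_def
  by (intro borel_measurable_times borel_measurable_prod gw_meas[OF phim])
     (rule measurable_compose[OF comp_lebk a_meas], simp)

lemma H_nonneg: "0 \<le> H t N xs"
  unfolding H_def using a_bounds gw_nonneg by (intro mult_nonneg_nonneg prod_nonneg) auto

lemma H_swap: "b < N \<Longrightarrow> H t N (\<lambda>i\<in>{..<N}. xs (Transposition.transpose b K i)) = H t N xs"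
  if "K < N"
proof -
  assume b: "b < N"
  have bij: "bij_betw (Transposition.transpose b K) {..<N} {..<N}"
    using permutes_swap_id[of b "{..<N}" K] b that permutes_imp_bij by auto
  have tK: "Transposition.transpose b K i < N" if "i < N" for i
    using that b \<open>K < N\<close> by (auto simp: Transposition.transpose_def)
  have "(\<Prod>i<N. a t ((\<lambda>i\<in>{..<N}. xs (Transposition.transpose b K i)) i)) = (\<Prod>i<N. a t (xs (Transposition.transpose b K i)))"
    by (intro prod.cong) auto
  also have "\<dots> = (\<Prod>i<N. a t (xs i))"
    using prod.reindex_bij_betw[OF bij, of "\<lambda>i. a t (xs i)"] by simp
  finally show ?thesis unfolding H_def using gw_swap[OF phisym b that] by simp
qed

lemma S3_nn:
  "(\<integral>\<^sup>+xs. ennreal (H t (Suc K) xs) \<partial>lebk (Suc K)) =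
    of_nat (Suc K) * (\<integral>\<^sup>+x. ennreal (a t x * Jh K x) \<partial>lborel)"
proof -
  let ?E = "{xs. \<forall>b\<in>{..<Suc K}. (xs K) $ j \<le> (xs b) $ j}"
  have "(\<integral>\<^sup>+xs. ennreal (H t (Suc K) xs) \<partial>lebk (Suc K)) =
      of_nat (Suc K) * (\<integral>\<^sup>+xs. ennreal (H t (Suc K) xs) * indicator ?E xs \<partial>lebk (Suc K))"
  proof (rule sym_min[where g = "\<lambda>y. y $ j"])
    show "\<And>c. {y::real^'d. y $ j = c} \<in> null_sets lborel" by (rule hyper_null)
    show "\<And>b xs. b < Suc K \<Longrightarrow> xs \<in> space (lebk (Suc K)) \<Longrightarrow>
      ennreal (H t (Suc K) (\<lambda>i\<in>{..<Suc K}. xs (Transposition.transpose b K i))) = ennreal (H t (Suc K) xs)"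
      using H_swap by simp
  qed simp_all
  also have "(\<integral>\<^sup>+xs. ennreal (H t (Suc K) xs) * indicator ?E xs \<partial>lebk (Suc K)) =
      (\<integral>\<^sup>+x. (\<integral>\<^sup>+ys. ennreal (H t (Suc K) (ys(K:=x))) * indicator ?E (ys(K:=x)) \<partial>lebk K) \<partial>lborel)"
  proof -
    have Em: "?E \<inter> space (lebk (Suc K)) \<in> sets (lebk (Suc K))"
    proof -
      have "?E \<inter> space (lebk (Suc K)) = {xs \<in> space (lebk (Suc K)). \<forall>b\<in>{..<Suc K}. (xs K) $ j \<le> (xs b) $ j}" by auto
      also have "\<dots> \<in> sets (lebk (Suc K))"
        by (rule E_meas) auto
      finally show ?thesis .
    qed
    have m: "(\<lambda>xs. ennreal (H t (Suc K) xs) * indicator ?E xs) \<in> borel_measurable (lebk (Suc K))"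
    proof -
      have "(\<lambda>xs. ennreal (H t (Suc K) xs) * indicator ?E xs) \<in> borel_measurable (lebk (Suc K))
        \<longleftrightarrow> (\<lambda>xs. ennreal (H t (Suc K) xs) * indicator (?E \<inter> space (lebk (Suc K))) xs) \<in> borel_measurable (lebk (Suc K))"
        by (intro measurable_cong) (auto split: split_indicator)
      also have "\<dots>" using Em by measurable
      finally show ?thesis .
    qed
    show ?thesis
      unfolding lebk_def lessThan_Suc
      by (rule lb.product_nn_integral_insert_rev) (use m in \<open>auto simp: lebk_def lessThan_Suc\<close>)
  qed
  also have "\<dots> = (\<integral>\<^sup>+x. (\<integral>\<^sup>+ys. ennreal (a t x) * ennreal (Q K x ys) \<partial>lebk K) \<partial>lborel)"
  proof (intro nn_integral_cong)
    fix x :: "real^'d" and ys :: "nat \<Rightarrow> real^'d"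
    assume ys: "ys \<in> space (lebk K)"
    let ?P = "(\<Prod>i<K. indicator {y. x $ j \<le> y $ j} (ys i) :: real)"
    have ind: "indicator ?E (ys(K:=x)) = ennreal ?P"
    proof (cases "\<forall>b<K. x$j \<le> ys b $ j")
      case True
      then have "?P = 1" by (intro prod.neutral) (auto simp: indicator_def)
      moreover have "ys(K:=x) \<in> ?E" using True by (auto simp: less_Suc_eq)
      ultimately show ?thesis by simp
    next
      case False
      then obtain b where b: "b < K" "\<not> x$j \<le> ys b $ j" by auto
      then have P: "?P = 0" by (subst prod_zero_iff) (auto simp: indicator_def)
      have nE: "ys(K:=x) \<notin> ?E" using b by (auto simp: less_Suc_eq)
      have "indicator ?E (ys(K:=x)) = (0::ennreal)" using nE by (rule indicator_simps(2))
      then show ?thesis by (simp only: P ennreal_0)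
    qed
    have P0: "0 \<le> ?P" by (simp add: prod_nonneg)
    have Hx: "H t (Suc K) (ys(K:=x)) = a t x * ((\<Prod>i<K. a t (ys i)) * gibbs_weight \<phi> K ys * (\<Prod>i<K. boltz \<phi> (x - ys i)))"
      unfolding H_def gw_insert using boltz_sym[OF phisym]
      by (simp add: lessThan_Suc prod.cong[OF refl, of _ "\<lambda>i. boltz \<phi> (ys i - x)" "\<lambda>i. boltz \<phi> (x - ys i)"])
    have real_eq: "H t (Suc K) (ys(K:=x)) * ?P = a t x * Q K x ys"
    proof (cases "a t x = 0")
      case True then show ?thesis using Hx by simp
    next
      case False
      then have x: "x \<in> cube n" "t \<le> x $ j" by (auto simp: act_t_def indicator_def split: if_splits)
      have pt: "a t y * indicator {y. x $ j \<le> y $ j} y = a (x $ j) y" for y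
        using x by (auto simp: act_t_def indicator_def)
      have pp: "(\<Prod>i<K. a t (ys i)) * ?P = (\<Prod>i<K. a (x$j) (ys i))"
        by (simp add: prod.distrib[symmetric] pt)
      show ?thesis unfolding Hx Q_def using pp by (simp add: mult_ac)
    qed
    show "ennreal (H t (Suc K) (ys(K:=x))) * indicator ?E (ys(K:=x)) = ennreal (a t x) * ennreal (Q K x ys)"
      unfolding ind using H_nonneg P0 a_bounds Q_nonneg real_eq
      by (simp add: ennreal_mult[symmetric])
  qed
  also have "\<dots> = (\<integral>\<^sup>+x. ennreal (a t x) * ennreal (Jh K x) \<partial>lborel)"
  proof (intro nn_integral_cong)
    fix x :: "real^'d"
    have "(\<integral>\<^sup>+ys. ennreal (a t x) * ennreal (Q K x ys) \<partial>lebk K) = ennreal (a t x) * (\<integral>\<^sup>+ys. ennreal (Q K x ys) \<partial>lebk K)"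
      by (rule nn_integral_cmult) (use Q_integrable in measurable)
    also have "(\<integral>\<^sup>+ys. ennreal (Q K x ys) \<partial>lebk K) = ennreal (Jh K x)"
      unfolding Jh_Q by (rule nn_integral_eq_integral) (auto simp: Q_integrable Q_nonneg)
    finally show "(\<integral>\<^sup>+ys. ennreal (a t x) * ennreal (Q K x ys) \<partial>lebk K) = ennreal (a t x) * ennreal (Jh K x)" .
  qed
  also have "\<dots> = (\<integral>\<^sup>+x. ennreal (a t x * Jh K x) \<partial>lborel)"
    using a_bounds Jh_nonneg by (intro nn_integral_cong) (simp add: ennreal_mult)
  finally show ?thesis .
qed

lemma indic_cube_int: "integrable lborel (indicator (cube n) :: real^'d \<Rightarrow> real)"
  using cube_fin[of n, where 'd='d] by (intro integrable_real_indicator) (auto simp: infinity_ennreal_def)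

lemma int_cube_indic: "(\<integral>x. indicator (cube n) x \<partial>(lborel :: (real^'d) measure)) = V"
  by (simp add: V_def)

lemma aJh_bound: "\<bar>a t x * Jh k x\<bar> \<le> l * (l*V)^k * indicator (cube n) x"
proof -
  have "\<bar>a t x * Jh k x\<bar> = a t x * Jh k x" using a_bounds Jh_nonneg by simp
  also have "\<dots> \<le> (l * indicator (cube n) x) * (l*V)^k"
    using a_bounds Jh_nonneg Jh_le l0 by (intro mult_mono) auto
  finally show ?thesis by (simp add: mult_ac)
qed

lemma aJh_integrable: "integrable lborel (\<lambda>x. a t x * Jh k x)"
proof (rule Bochner_Integration.integrable_bound)
  show "integrable lborel (\<lambda>x::real^'d. l * (l*V)^k * indicator (cube n) x :: real)"
    by (rule integrable_mult_right[OF indic_cube_int])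
  show "AE x in lborel. norm (a t x * Jh k x) \<le> norm (l * (l*V)^k * indicator (cube n) x :: real)"
    using aJh_bound l0 V_nonneg by (intro AE_I2) (auto simp: abs_mult)
qed measurable

lemma jan_Suc: "janossy_int \<phi> (a t) (Suc k) (\<lambda>_ _. 1) = of_nat (Suc k) * (\<integral>x. a t x * Jh k x \<partial>lborel)"
proof -
  have "janossy_int \<phi> (a t) (Suc k) (\<lambda>_ _. 1) = (\<integral>xs. H t (Suc k) xs \<partial>lebk (Suc k))"
    by (simp add: janossy_int_def H_def)
  also have "\<dots> = enn2real (\<integral>\<^sup>+xs. ennreal (H t (Suc k) xs) \<partial>lebk (Suc k))"
    by (rule integral_eq_nn_integral) (auto simp: H_nonneg)
  also have "\<dots> = enn2real (of_nat (Suc k) * (\<integral>\<^sup>+x. ennreal (a t x * Jh k x) \<partial>lborel))"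
    by (simp only: S3_nn)
  also have "(\<integral>\<^sup>+x. ennreal (a t x * Jh k x) \<partial>lborel) = ennreal (\<integral>x. a t x * Jh k x \<partial>lborel)"
    by (rule nn_integral_eq_integral) (use aJh_integrable a_bounds Jh_nonneg in auto)
  also have "of_nat (Suc k) * ennreal (\<integral>x. a t x * Jh k x \<partial>lborel) = ennreal (real (Suc k) * (\<integral>x. a t x * Jh k x \<partial>lborel))"
    using Bochner_Integration.integral_nonneg[of lborel "\<lambda>x. a t x * Jh k x"] a_bounds Jh_nonneg
    by (simp add: ennreal_mult ennreal_of_nat_eq_real_of_nat)
  finally show ?thesis
    using Bochner_Integration.integral_nonneg[of lborel "\<lambda>x. a t x * Jh k x"] a_bounds Jh_nonneg
    by simp
qed

definition NN :: "real^'d \<Rightarrow> real" where "NN x = (\<Sum>k. Jh k x / fact k)"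

lemma NN_terms_le: "\<bar>Jh k x / fact k\<bar> \<le> (l*V)^k / fact k"
  using Jh_nonneg Jh_le by (simp add: divide_right_mono)

lemma exp_summable: "summable (\<lambda>k. (l*V)^k / fact k)"
  using summable_exp[of "l*V"] by (simp add: field_simps)

lemma NN_summable: "summable (\<lambda>k. Jh k x / fact k)"
  by (rule summable_comparison_test'[OF exp_summable]) (use NN_terms_le in \<open>auto\<close>)

lemma NN_nonneg: "0 \<le> NN x"
  unfolding NN_def using NN_summable Jh_nonneg by (intro suminf_nonneg) auto

lemma NN_le: "NN x \<le> exp (l*V)"
proof -
  have "NN x \<le> (\<Sum>k. (l*V)^k / fact k)"
    unfolding NN_def using NN_summable exp_summable
    by (intro suminf_le) (auto simp: divide_right_mono Jh_le)
  also have "\<dots> = exp (l*V)" by (simp add: exp_def field_simps)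
  finally show ?thesis .
qed

lemma NN_meas[measurable]: "NN \<in> borel_measurable borel"
  unfolding NN_def by measurable

lemma NN_split: "NN x = 1 + (\<Sum>k. Jh (Suc k) x / fact (Suc k))"
  using suminf_split_head[OF NN_summable[of x]] by (simp add: NN_def Jh_0)

lemma Z_eq: "Z_act \<phi> (a t) = 1 + (\<integral>x. a t x * NN x \<partial>lborel)"
proof -
  let ?g = "\<lambda>k x. a t x * Jh k x / fact k"
  have gi: "integrable lborel (?g k)" for k
    using aJh_integrable by (intro integrable_divide)
  have tm_eq: "janossy_int \<phi> (a t) (Suc k) (\<lambda>_ _. 1) / fact (Suc k) = (\<integral>x. ?g k x \<partial>lborel)" for k
    unfolding jan_Suc by (simp add: fact_Suc field_simps del: of_nat_Suc)
  have ib: "norm (\<integral>x. norm (?g k x) \<partial>lborel) \<le> (l*V) * ((l*V)^k / fact k)" for k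
  proof -
    have "norm (\<integral>x. norm (?g k x) \<partial>lborel) = (\<integral>x. norm (?g k x) \<partial>lborel)"
      by (simp add: Bochner_Integration.integral_nonneg)
    also have "\<dots> \<le> (\<integral>x. l * (l*V)^k * indicator (cube n) x / fact k \<partial>(lborel :: (real^'d) measure))"
    proof (rule Bochner_Integration.integral_mono)
      show "integrable lborel (\<lambda>x. norm (?g k x))" using gi by (rule integrable_norm)
      show "integrable lborel (\<lambda>x::real^'d. l * (l*V)^k * indicator (cube n) x / fact k)"
        using indic_cube_int by (intro integrable_divide integrable_mult_right)
      fix x :: "real^'d"
      show "norm (?g k x) \<le> l * (l*V)^k * indicator (cube n) x / fact k"
        using aJh_bound[of t x k] by (simp add: divide_right_mono)
    qed
    also have "\<dots> = l * (l*V)^k * V / fact k"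
      by (simp add: V_def)
    finally show ?thesis by (simp add: field_simps)
  qed
  have "(\<Sum>k. janossy_int \<phi> (a t) (Suc k) (\<lambda>_ _. 1) / fact (Suc k)) = (\<Sum>k. \<integral>x. ?g k x \<partial>lborel)"
    by (simp only: tm_eq)
  also have "\<dots> = (\<integral>x. (\<Sum>k. ?g k x) \<partial>lborel)"
  proof (rule integral_suminf[symmetric])
    show "integrable lborel (?g k)" for k by (rule gi)
    show "AE x in lborel. summable (\<lambda>k. norm (?g k x))"
    proof (intro AE_I2)
      fix x :: "real^'d"
      have "summable (\<lambda>k. a t x * (Jh k x / fact k))" by (intro summable_mult NN_summable)
      moreover have "norm (?g k x) = a t x * (Jh k x / fact k)" for k
        using a_bounds Jh_nonneg by simp
      ultimately show "summable (\<lambda>k. norm (?g k x))" by simp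
    qed
    show "summable (\<lambda>k. \<integral>x. norm (?g k x) \<partial>lborel)"
      by (rule summable_comparison_test'[OF summable_mult[OF exp_summable, of "l*V"]]) (use ib in auto)
  qed
  also have "\<dots> = (\<integral>x. a t x * NN x \<partial>lborel)"
  proof (intro Bochner_Integration.integral_cong refl)
    fix x :: "real^'d"
    show "(\<Sum>k. ?g k x) = a t x * NN x"
      unfolding NN_def using suminf_mult[OF NN_summable[of x], of "a t x"] by (simp add: field_simps)
  qed
  finally show ?thesis by (simp add: Z_act_def)
qed


definition ff :: "real^'d \<Rightarrow> real" where "ff x = l * indicator (cube n) x * NN x"

lemma ff_meas[measurable]: "ff \<in> borel_measurable borel"
  unfolding ff_def by (intro borel_measurable_times borel_measurable_const NN_meas borel_measurable_indicator cube_meas)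

lemma ff_nonneg: "0 \<le> ff x"
  unfolding ff_def using l0 NN_nonneg by simp

lemma ff_integrable: "integrable lborel ff"
proof (rule Bochner_Integration.integrable_bound)
  show "integrable lborel (\<lambda>x::real^'d. l * exp (l*V) * indicator (cube n) x :: real)"
    by (rule integrable_mult_right[OF indic_cube_int])
  show "AE x in lborel. norm (ff x) \<le> norm (l * exp (l*V) * indicator (cube n) x :: real)"
  proof (intro AE_I2)
    fix x :: "real^'d"
    have "norm (ff x) = l * indicator (cube n) x * NN x" unfolding ff_def using l0 NN_nonneg by simp
    also have "\<dots> \<le> l * indicator (cube n) x * exp (l*V)"
      using l0 NN_le by (intro mult_left_mono) auto
    finally show "norm (ff x) \<le> norm (l * exp (l*V) * indicator (cube n) x :: real)" using l0 by (simp add: mult_ac)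
  qed
qed simp

lemma aNN: "a t y * NN y = ff y * indicator {y. t \<le> y$j} y"
  by (simp add: act_t_def ff_def)

lemma Z_ff: "Z_act \<phi> (a t) = 1 + (\<integral>y. ff y * indicator {y. t \<le> y$j} y \<partial>lborel)"
  unfolding Z_eq aNN ..

lemma cube_coord: "y \<in> cube n \<Longrightarrow> - real n \<le> y $ j"
  by (simp add: cube_def)

lemma Zvol_eq: "Z_vol \<phi> (cube n) l = Z_act \<phi> (a (- real n))"
proof -
  have tm: "l ^ Suc k / fact (Suc k) * (\<integral>xs. indicator (PiE {..<Suc k} (\<lambda>_. cube n)) xs * gibbs_weight \<phi> (Suc k) xs \<partial>lebk (Suc k))
      = janossy_int \<phi> (a (- real n)) (Suc k) (\<lambda>_ _. 1) / fact (Suc k)" for k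
  proof -
    have "janossy_int \<phi> (a (- real n)) (Suc k) (\<lambda>_ _. 1) =
        (\<integral>xs. l ^ Suc k * (indicator (PiE {..<Suc k} (\<lambda>_. cube n)) xs * gibbs_weight \<phi> (Suc k) xs) \<partial>lebk (Suc k))"
      unfolding janossy_int_def
    proof (intro Bochner_Integration.integral_cong refl)
      fix xs :: "nat \<Rightarrow> real^'d" assume xs: "xs \<in> space (lebk (Suc k))"
      have "(\<Prod>i<Suc k. a (- real n) (xs i)) = (\<Prod>i<Suc k. l * indicator (cube n) (xs i))"
        by (intro prod.cong refl) (auto simp: act_t_def indicator_def cube_coord)
      also have "\<dots> = l ^ Suc k * indicator (PiE {..<Suc k} (\<lambda>_. cube n)) xs"
        using xs by (auto simp: prod.distrib indicator_def space_lebk PiE_iff prod_zero_iff less_Suc_eq)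
      finally show "(\<Prod>i<Suc k. a (- real n) (xs i)) * gibbs_weight \<phi> (Suc k) xs * 1 =
          l ^ Suc k * (indicator (PiE {..<Suc k} (\<lambda>_. cube n)) xs * gibbs_weight \<phi> (Suc k) xs)"
        by simp
    qed
    also have "\<dots> = l ^ Suc k * (\<integral>xs. indicator (PiE {..<Suc k} (\<lambda>_. cube n)) xs * gibbs_weight \<phi> (Suc k) xs \<partial>lebk (Suc k))"
      by (rule integral_mult_right_zero)
    finally show ?thesis by simp
  qed
  show ?thesis unfolding Z_vol_def Z_act_def tm ..
qed

lemma opd_eq: "indicator (cube n) x * one_point_density \<phi> (a (x$j)) x
    = ff x / (1 + (\<integral>y. ff y * indicator {y. x$j \<le> y$j} y \<partial>lborel))"
proof (cases "x \<in> cube n")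
  case False then show ?thesis by (simp add: ff_def)
next
  case True
  have ax: "a (x$j) x = l" using True by (simp add: act_t_def)
  have num: "(\<lambda>(k::nat) xs. \<Prod>i<k. boltz \<phi> (x - xs i)) 0 (\<lambda>_. undefined) +
      (\<Sum>k. janossy_int \<phi> (a (x$j)) (Suc k) (\<lambda>k xs. \<Prod>i<k. boltz \<phi> (x - xs i)) / fact (Suc k)) = NN x"
    unfolding NN_split by (simp add: Jh_def card_lessThan)
  show ?thesis
    using True unfolding one_point_density_def gibbs_expect_def num Z_ff ax
    by (simp add: ff_def)
qed

lemma main: "ln (Z_vol \<phi> (cube n) l) = (\<integral>x\<in>cube n. one_point_density \<phi> (act_t l n j (x $ j)) x \<partial>lborel)"
proof -
  have "(\<integral>y. ff y * indicator {y. - real n \<le> y$j} y \<partial>lborel) = (\<integral>y. ff y \<partial>lborel)"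
    by (intro Bochner_Integration.integral_cong refl) (auto simp: ff_def indicator_def cube_coord)
  then have "ln (Z_vol \<phi> (cube n) l) = ln (1 + (\<integral>y. ff y \<partial>lborel))"
    by (simp add: Zvol_eq Z_ff)
  also have "\<dots> = (\<integral>x. ff x / (1 + (\<integral>y. ff y * indicator {y. x$j \<le> y$j} y \<partial>lborel)) \<partial>lborel)"
    by (rule lemA[OF ff_meas ff_nonneg ff_integrable, symmetric])
  also have "\<dots> = (\<integral>x\<in>cube n. one_point_density \<phi> (act_t l n j (x $ j)) x \<partial>lborel)"
    unfolding set_lebesgue_integral_def by (simp add: opd_eq)
  finally show ?thesis .
qed

end

theorem corollary17:
  fixes \<phi> :: "real^'d \<Rightarrow> ereal" and l :: real and n :: nat and j :: 'd
  assumes "\<phi> \<in> borel_measurable borel"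
    and "\<forall>x. \<phi> (- x) = \<phi> x"
    and "\<forall>x. \<phi> x \<ge> 0"
    and "\<exists>R. \<forall>x. norm x > R \<longrightarrow> \<phi> x = 0"
    and "l > 0"
  shows "ln (Z_vol \<phi> (cube n) l) =
         (\<integral>x\<in>cube n. one_point_density \<phi> (act_t l n j (x $ j)) x \<partial>lborel)"
proof -
  interpret gs \<phi> l n j using assms by unfold_locales auto
  show ?thesis by (rule main)
qed

end
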